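(* Let $n\ge1$. For every function $f(t)=\sum_{j=1}^na_je^{\lambda_jt}$ with $a_j,\lambda_j\in\mathbb{C}$ and $\mathrm{Re}(\lambda_j)<0$ for all $j$, $$\|f'\|_{L_2[0,\infty)} \le \left(\frac12+\max_{1\le j\le n}\left|\lambda_j+\frac12\right| + 2\left(\sum_{j=1}^n\mathrm{Re}(\lambda_j)\sum_{k=j+1}^n\mathrm{Re}(\lambda_k)\right)^{1/2}\right)\|f\|_{L_2[0,\infty)}.$$
   Context: $\|g\|_{L_2[0,\infty)}:=(\int_0^\infty|g(t)|^2dt)^{1/2}$. *)

theory Defs
  imports "HOL-Analysis.Analysis"
begin

definition L2_norm_pos :: "(real \<Rightarrow> complex) \<Rightarrow> real" where
  "L2_norm_pos g = sqrt (LINT t:{0..}|lborel. (cmod (g t))^2)"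

end

theory Submission
  imports Defs "HOL-Probability.Sinc_Integral"
begin


lemma exp_set_integrable:
  fixes z :: complex assumes "Re z < 0"
  shows "set_integrable lborel {0<..} (\<lambda>x::real. exp (z * of_real x))"
proof (rule set_integrable_bound[OF integrable_I0i_exp_mscale[of "- Re z"]])
  show "0 < - Re z" using assms by simp
  show "set_borel_measurable lborel {0<..} (\<lambda>x::real. exp (z * of_real x))"
    unfolding set_borel_measurable_def by measurable
  show "AE x in lborel. x \<in> {0<..} \<longrightarrow> norm (exp (z * of_real x)) \<le> norm (exp (- (x * - Re z)))"
    by (simp add: norm_exp_eq_Re mult.commute)
qed

lemma exp_set_integral:
  fixes z :: complex assumes "Re z < 0"
  shows "(LINT x:{0<..}|lborel. exp (z * of_real x)) = - 1 / z"
proof -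
  have z: "z \<noteq> 0" using assms by auto
  have "(LBINT x=0..\<infinity>. exp (z * of_real x)) = 0 - 1 / z"
  proof (rule interval_integral_FTC_integrable[where F="\<lambda>x. exp (z * of_real x) / z"])
    show "(0::ereal) < \<infinity>" by simp
    show "((\<lambda>x. exp (z * of_real x) / z) has_vector_derivative exp (z * of_real x)) (at x)" for x
    proof -
      have "((\<lambda>w. exp (z * w) / z) has_field_derivative exp (z * of_real x)) (at (of_real x))"
        using z by (auto intro!: derivative_eq_intros simp: field_simps)
      then show ?thesis by (rule has_vector_derivative_real_field)
    qed
    show "isCont (\<lambda>x::real. exp (z * of_real x)) x" for x by (intro continuous_intros)
    show "set_integrable lborel (einterval 0 \<infinity>) (\<lambda>x::real. exp (z * of_real x))"
      using exp_set_integrable[OF assms] by (simp add: zero_ereal_def)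
    show "(((\<lambda>x. exp (z * of_real x) / z) \<circ> real_of_ereal) \<longlongrightarrow> 1 / z) (at_right 0)"
      using z by (auto simp: zero_ereal_def ereal_tendsto_simps intro!: tendsto_eq_intros)
    have *: "((\<lambda>x::real. exp (z * of_real x) / z) \<longlongrightarrow> 0) at_top"
    proof (rule tendsto_norm_zero_cancel)
      have "((\<lambda>x::real. exp (Re z * x) / cmod z) \<longlongrightarrow> 0) at_top"
      proof (rule tendsto_divide_zero)
        have "filterlim (\<lambda>x::real. Re z * x) at_bot at_top"
          using assms by (auto intro!: filterlim_tendsto_neg_mult_at_bot filterlim_ident)
        then show "((\<lambda>x::real. exp (Re z * x)) \<longlongrightarrow> 0) at_top"
          by (rule exp_at_bot[THEN filterlim_compose])
      qed
      then show "((\<lambda>x::real. norm (exp (z * of_real x) / z)) \<longlongrightarrow> 0) at_top"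
        by (simp add: norm_divide norm_exp_eq_Re mult.commute)
    qed
    show "(((\<lambda>x. exp (z * of_real x) / z) \<circ> real_of_ereal) \<longlongrightarrow> 0) (at_left \<infinity>)"
      using * unfolding ereal_tendsto_simps by simp
  qed
  then show ?thesis by (simp add: interval_lebesgue_integral_0_infty)
qed

lemma exp_hbi:
  fixes z :: complex assumes "Re z < 0"
  shows "has_bochner_integral lborel (\<lambda>x::real. indicator {0<..} x *\<^sub>R exp (z * of_real x)) (- 1 / z)"
  using exp_set_integrable[OF assms] exp_set_integral[OF assms]
  unfolding has_bochner_integral_iff set_integrable_def set_lebesgue_integral_def by simp

definition Gk :: "complex \<Rightarrow> complex \<Rightarrow> complex" where
  "Gk \<mu> \<nu> = - 1 / (\<mu> + cnj \<nu>)"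
definition ip :: "complex set \<Rightarrow> (complex \<Rightarrow> complex) \<Rightarrow> (complex \<Rightarrow> complex) \<Rightarrow> complex" where
  "ip L c d = (\<Sum>\<mu>\<in>L. \<Sum>\<nu>\<in>L. c \<mu> * cnj (d \<nu>) * Gk \<mu> \<nu>)"
definition nq :: "complex set \<Rightarrow> (complex \<Rightarrow> complex) \<Rightarrow> real" where
  "nq L c = Re (ip L c c)"
definition expf :: "complex set \<Rightarrow> (complex \<Rightarrow> complex) \<Rightarrow> real \<Rightarrow> complex" where
  "expf L c t = (\<Sum>\<mu>\<in>L. c \<mu> * exp (\<mu> * of_real t))"

lemma exp_mul_cnj: "exp (a * of_real x) * cnj (exp (b * of_real x)) = exp ((a + cnj b) * of_real x)"
  by (simp add: exp_cnj exp_add[symmetric] distrib_right)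


lemma term_eq: "c * exp (m * of_real x) * cnj (d * exp (n * of_real x)) = c * cnj d * exp ((m + cnj n) * of_real x)"
  by (subst exp_mul_cnj[symmetric]) (simp add: mult_ac)

lemma meas_expf: "(\<lambda>t. (cmod (expf L c t))^2) \<in> borel_measurable lborel"
proof -
  have "continuous_on UNIV (\<lambda>t. (cmod (expf L c t))^2)"
    unfolding expf_def by (intro continuous_intros)
  then show ?thesis using borel_measurable_continuous_onI by simp
qed

lemma cong_0:
  fixes f :: "real \<Rightarrow> real"
  assumes [measurable]: "f \<in> borel_measurable lborel"
  shows "(LINT t:{0..}|lborel. f t) = (LINT t:{0<..}|lborel. f t)"
proof (rule set_integral_cong_set)
  show "set_borel_measurable lborel {0<..} f" "set_borel_measurable lborel {0..} f"
    unfolding set_borel_measurable_def by measurable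
  show "AE x in lborel. (x \<in> {0<..}) = (x \<in> {0::real..})"
    using AE_lborel_singleton[of 0] by (rule eventually_mono) (auto simp: less_le)
qed

lemma L2_expf:
  assumes fin: "finite L" and neg: "\<forall>\<mu>\<in>L. Re \<mu> < 0"
  shows "(LINT t:{0..}|lborel. (cmod (expf L c t))^2) = nq L c"
proof -
  let ?g = "\<lambda>x::real. (\<Sum>\<mu>\<in>L. \<Sum>\<nu>\<in>L. c \<mu> * cnj (c \<nu>) * exp ((\<mu> + cnj \<nu>) * of_real x))"
  have hb: "has_bochner_integral lborel (\<lambda>x. indicator {0<..} x *\<^sub>R ?g x) (ip L c c)"
    unfolding ip_def Gk_def scaleR_sum_right
  proof (intro has_bochner_integral_sum)
    fix \<mu> \<nu> assume m: "\<mu> \<in> L" and n: "\<nu> \<in> L"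
    have "Re \<mu> < 0" "Re \<nu> < 0" using neg m n by auto
    then have "Re (\<mu> + cnj \<nu>) < 0" by simp
    from has_bochner_integral_mult_right[OF exp_hbi[OF this], of "c \<mu> * cnj (c \<nu>)"]
    have "has_bochner_integral lborel (\<lambda>x. c \<mu> * cnj (c \<nu>) * (indicator {0<..} x *\<^sub>R exp ((\<mu> + cnj \<nu>) * of_real x)))
          (c \<mu> * cnj (c \<nu>) * (- 1 / (\<mu> + cnj \<nu>)))" .
    moreover have "(\<lambda>x. c \<mu> * cnj (c \<nu>) * (indicator {0<..} x *\<^sub>R exp ((\<mu> + cnj \<nu>) * of_real x)))
        = (\<lambda>x. indicator {0<..} x *\<^sub>R (c \<mu> * cnj (c \<nu>) * exp ((\<mu> + cnj \<nu>) * of_real x)))"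
      by (rule ext) (simp add: indicator_def)
    ultimately show "has_bochner_integral lborel (\<lambda>x. indicator {0<..} x *\<^sub>R (c \<mu> * cnj (c \<nu>) * exp ((\<mu> + cnj \<nu>) * of_real x)))
          (c \<mu> * cnj (c \<nu>) * (- 1 / (\<mu> + cnj \<nu>)))" by simp
  qed
  have eq: "complex_of_real ((cmod (expf L c x))^2) = ?g x" for x
  proof -
    have "complex_of_real ((cmod (expf L c x))^2) = expf L c x * cnj (expf L c x)"
      by (rule complex_norm_square)
    also have "\<dots> = ?g x"
      unfolding expf_def cnj_sum sum_product
      by (intro sum.cong refl) (rule term_eq)
    finally show ?thesis .
  qed
  have "(LINT t:{0..}|lborel. (cmod (expf L c t))^2) = (LINT t:{0<..}|lborel. (cmod (expf L c t))^2)"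
    by (rule cong_0[OF meas_expf])
  also have "complex_of_real \<dots> = (LINT t:{0<..}|lborel. complex_of_real ((cmod (expf L c t))^2))"
    by (rule set_integral_complex_of_real[symmetric])
  also have "\<dots> = (LINT t:{0<..}|lborel. ?g t)"
    unfolding eq ..
  also have "\<dots> = ip L c c"
    using hb unfolding set_lebesgue_integral_def by (rule has_bochner_integral_integral_eq)
  finally show ?thesis unfolding nq_def by (metis Re_complex_of_real)
qed



definition Aco :: "complex \<Rightarrow> complex \<Rightarrow> complex" where
  "Aco l v = (l + cnj l) / (l - v)"
definition Bco :: "complex \<Rightarrow> complex \<Rightarrow> complex" where
  "Bco l v = (v + cnj l) / (v - l)"
definition comb :: "complex \<Rightarrow> complex set \<Rightarrow> complex \<Rightarrow> (complex \<Rightarrow> complex) \<Rightarrow> complex \<Rightarrow> complex" where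
  "comb l L a g = (\<lambda>m. if m = l then a + (\<Sum>v\<in>L. Aco l v * g v) else Bco l m * g m)"

lemma cnj_ne: "Re a < 0 \<Longrightarrow> Re b < 0 \<Longrightarrow> a + cnj b \<noteq> 0"
  by (metis add_neg_neg complex_cnj_add complex_cnj_cnj complex_cnj_zero_iff less_irrefl plus_complex.sel(1) zero_complex.simps(1) cnj.sel(1))

lemma id1:
  assumes "Re l < 0" "Re m < 0" "m \<noteq> l"
  shows "Bco l m * Gk m l = - Gk l l * Aco l m"
proof -
  have "m + cnj l \<noteq> 0" "l + cnj l \<noteq> 0" using cnj_ne assms by auto
  moreover have "m - l \<noteq> 0" "l - m \<noteq> 0" using assms by auto
  ultimately show ?thesis unfolding Bco_def Gk_def Aco_def by (simp add: field_simps)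
qed

lemma id2:
  assumes "Re l < 0" "Re m < 0" "m \<noteq> l"
  shows "cnj (Bco l m) * Gk l m = - Gk l l * cnj (Aco l m)"
proof -
  have "l + cnj m \<noteq> 0" "l + cnj l \<noteq> 0" using cnj_ne assms by auto
  moreover have "cnj l + m \<noteq> 0" using cnj_ne[of m l] assms by (simp add: add.commute)
  moreover have "cnj m - cnj l \<noteq> 0" "cnj l - cnj m \<noteq> 0" using assms by auto
  ultimately show ?thesis unfolding Bco_def Gk_def Aco_def by (simp add: field_simps)
qed

lemma fid3:
  fixes s u w :: complex
  assumes "s \<noteq> 0" "u \<noteq> 0" "w \<noteq> 0"
  shows "(s - w)/u * ((s - u)/w) * (-1/s) = -1/s - (s-u-w)/((-u)*(-w))"
  using assms by (simp add: field_simps)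

lemma id3:
  assumes "Re l < 0" "Re m < 0" "m \<noteq> l" "Re n < 0" "n \<noteq> l"
  shows "Bco l m * cnj (Bco l n) * Gk m n = Gk m n + Gk l l * Aco l m * cnj (Aco l n)"
proof -
  have nz: "m + cnj n \<noteq> 0" "l + cnj l \<noteq> 0" using cnj_ne assms by auto
  have nz2: "cnj n - cnj l \<noteq> 0" "m - l \<noteq> 0" using assms by auto
  have e: "m + cnj n - (cnj n - cnj l) = m + cnj l" "m + cnj n - (m - l) = cnj n + l"
    "m + cnj n - (m - l) - (cnj n - cnj l) = cnj l + l" "- (m - l) = l - m" "- (cnj n - cnj l) = cnj l - cnj n" "cnj n + l - (cnj n - cnj l) = cnj l + l"
    by (simp_all add: algebra_simps)
  have key: "(m + cnj l)/(m - l) * ((cnj n + l)/(cnj n - cnj l)) * (-1/(m+cnj n)) = -1/(m+cnj n) - (cnj l + l)/((l-m)*(cnj l - cnj n))"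
    using fid3[OF nz(1) nz2(2) nz2(1)] unfolding e .
  have g: "Gk l l * Aco l m * cnj (Aco l n) = - ((cnj l + l)/((l-m)*(cnj l - cnj n)))"
    using nz(2) unfolding Gk_def Aco_def by (simp add: field_simps add.commute)
  show ?thesis unfolding g unfolding Bco_def Gk_def using key by (simp add: add.commute)
qed

lemma id4: assumes "m \<noteq> l" shows "Aco l m + Bco l m = 1"
proof -
  have d: "l - m \<noteq> 0" using assms by simp
  have "Bco l m = - (m + cnj l) / (l - m)"
    unfolding Bco_def by (metis divide_minus_right minus_diff_eq divide_minus_left)
  then have "Aco l m + Bco l m = ((l + cnj l) + - (m + cnj l)) / (l - m)"
    unfolding Aco_def by (simp only: add_divide_distrib)
  also have "\<dots> = (l - m) / (l - m)" by (simp add: algebra_simps)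
  also have "\<dots> = 1" using d by simp
  finally show ?thesis .
qed

lemma id5: "m \<noteq> l \<Longrightarrow> l * Aco l m = (l + cnj l) + Aco l m * m"
  unfolding Aco_def by (simp add: field_simps)

lemma ip_insert:
  assumes "finite L" "l \<notin> L"
  shows "ip (insert l L) x y = x l * cnj (y l) * Gk l l + x l * (\<Sum>v\<in>L. cnj (y v) * Gk l v)
     + (\<Sum>m\<in>L. x m * Gk m l) * cnj (y l) + ip L x y"
  using assms unfolding ip_def
  by (simp add: sum.distrib sum_distrib_left sum_distrib_right mult_ac)

lemma ip_cong:
  assumes "\<And>m. m \<in> L \<Longrightarrow> x m = x' m" "\<And>m. m \<in> L \<Longrightarrow> y m = y' m"
  shows "ip L x y = ip L x' y'"
  unfolding ip_def using assms by (intro sum.cong refl) auto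

lemma comb_l: "comb l L a g l = a + (\<Sum>v\<in>L. Aco l v * g v)"
  unfolding comb_def by simp

lemma comb_m: "m \<noteq> l \<Longrightarrow> comb l L a g m = Bco l m * g m"
  unfolding comb_def by simp

lemma ip_comb:
  assumes fin: "finite L" and nl: "l \<notin> L" and rl: "Re l < 0" and rv: "\<forall>v\<in>L. Re v < 0"
  shows "ip (insert l L) (comb l L a g) (comb l L b h) = a * cnj b * Gk l l + ip L g h"
proof -
  define sg where "sg = (\<Sum>v\<in>L. Aco l v * g v)"
  define sh where "sh = (\<Sum>v\<in>L. Aco l v * h v)"
  have ne: "\<And>v. v \<in> L \<Longrightarrow> v \<noteq> l" using nl by auto
  have S1: "(\<Sum>v\<in>L. cnj (comb l L b h v) * Gk l v) = - Gk l l * cnj sh"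
  proof -
    have "(\<Sum>v\<in>L. cnj (comb l L b h v) * Gk l v) = (\<Sum>v\<in>L. - Gk l l * (cnj (Aco l v) * cnj (h v)))"
    proof (rule sum.cong[OF refl])
      fix v assume v: "v \<in> L"
      have "cnj (comb l L b h v) * Gk l v = cnj (h v) * (cnj (Bco l v) * Gk l v)"
        using ne[OF v] by (simp add: comb_m)
      also have "\<dots> = - Gk l l * (cnj (Aco l v) * cnj (h v))"
        using id2[OF rl _ ne[OF v]] rv v by simp
      finally show "cnj (comb l L b h v) * Gk l v = - Gk l l * (cnj (Aco l v) * cnj (h v))" .
    qed
    also have "\<dots> = - Gk l l * cnj sh"
      unfolding sh_def cnj_sum sum_distrib_left by simp
    finally show ?thesis .
  qed
  have S2: "(\<Sum>m\<in>L. comb l L a g m * Gk m l) = - Gk l l * sg"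
  proof -
    have "(\<Sum>m\<in>L. comb l L a g m * Gk m l) = (\<Sum>m\<in>L. - Gk l l * (Aco l m * g m))"
    proof (rule sum.cong[OF refl])
      fix v assume v: "v \<in> L"
      have "comb l L a g v * Gk v l = g v * (Bco l v * Gk v l)"
        using ne[OF v] by (simp add: comb_m)
      also have "\<dots> = - Gk l l * (Aco l v * g v)"
        using id1[OF rl _ ne[OF v]] rv v by simp
      finally show "comb l L a g v * Gk v l = - Gk l l * (Aco l v * g v)" .
    qed
    also have "\<dots> = - Gk l l * sg"
      unfolding sg_def sum_distrib_left by simp
    finally show ?thesis .
  qed
  have S4: "ip L (comb l L a g) (comb l L b h) = ip L g h + Gk l l * sg * cnj sh"
  proof -
    have "ip L (comb l L a g) (comb l L b h) =
        (\<Sum>m\<in>L. \<Sum>v\<in>L. g m * cnj (h v) * Gk m v + Gk l l * ((Aco l m * g m) * cnj (Aco l v * h v)))"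
      unfolding ip_def
    proof (intro sum.cong refl)
      fix m v assume m: "m \<in> L" and v: "v \<in> L"
      have "comb l L a g m * cnj (comb l L b h v) * Gk m v = g m * cnj (h v) * (Bco l m * cnj (Bco l v) * Gk m v)"
        using ne[OF m] ne[OF v] by (simp add: comb_m mult_ac)
      also have "\<dots> = g m * cnj (h v) * (Gk m v + Gk l l * Aco l m * cnj (Aco l v))"
        using id3[OF rl _ ne[OF m] _ ne[OF v]] rv m v by simp
      also have "\<dots> = g m * cnj (h v) * Gk m v + Gk l l * ((Aco l m * g m) * cnj (Aco l v * h v))"
        by (simp add: algebra_simps)
      finally show "comb l L a g m * cnj (comb l L b h v) * Gk m v = g m * cnj (h v) * Gk m v + Gk l l * ((Aco l m * g m) * cnj (Aco l v * h v))" .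
    qed
    also have "\<dots> = ip L g h + Gk l l * (\<Sum>m\<in>L. \<Sum>v\<in>L. (Aco l m * g m) * cnj (Aco l v * h v))"
      unfolding ip_def by (simp add: sum.distrib sum_distrib_left)
    also have "(\<Sum>m\<in>L. \<Sum>v\<in>L. (Aco l m * g m) * cnj (Aco l v * h v)) = sg * cnj sh"
      unfolding sg_def sh_def cnj_sum sum_product ..
    finally show ?thesis by (simp add: mult.assoc)
  qed
  have "ip (insert l L) (comb l L a g) (comb l L b h) =
      (a + sg) * cnj (b + sh) * Gk l l + (a + sg) * (- Gk l l * cnj sh) + (- Gk l l * sg) * cnj (b + sh)
      + (ip L g h + Gk l l * sg * cnj sh)"
    unfolding ip_insert[OF fin nl] S1 S2 S4 comb_l sg_def sh_def ..
  also have "\<dots> = a * cnj b * Gk l l + ip L g h"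
    by (simp add: algebra_simps)
  finally show ?thesis .
qed

definition sig :: "complex set \<Rightarrow> (complex \<Rightarrow> complex) \<Rightarrow> complex" where
  "sig L c = (\<Sum>m\<in>L. c m)"

lemma sig_comb:
  assumes "finite L" "l \<notin> L"
  shows "sig (insert l L) (comb l L a g) = a + sig L g"
proof -
  have "(\<Sum>m\<in>L. comb l L a g m) = (\<Sum>m\<in>L. Bco l m * g m)"
    using assms(2) by (intro sum.cong refl comb_m) auto
  then have "sig (insert l L) (comb l L a g) = a + (\<Sum>v\<in>L. Aco l v * g v) + (\<Sum>m\<in>L. Bco l m * g m)"
    unfolding sig_def using assms by (simp add: comb_l)
  also have "\<dots> = a + (\<Sum>v\<in>L. (Aco l v + Bco l v) * g v)"
    by (simp add: sum.distrib distrib_right)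
  also have "\<dots> = a + sig L g"
  proof -
    have "\<And>x. x \<in> L \<Longrightarrow> Aco l x + Bco l x = 1" using assms(2) id4 by metis
    then show ?thesis unfolding sig_def by (intro arg_cong[where f="\<lambda>x. a + x"] sum.cong refl) auto
  qed
  finally show ?thesis .
qed

lemma comb_D:
  assumes "finite L" "l \<notin> L" "m \<in> insert l L"
  shows "m * comb l L a g m = comb l L (l * a + (l + cnj l) * sig L g) (\<lambda>v. v * g v) m"
proof (cases "m = l")
  case True
  have "l * (\<Sum>v\<in>L. Aco l v * g v) = (\<Sum>v\<in>L. (l + cnj l) * g v + Aco l v * (v * g v))"
    unfolding sum_distrib_left
  proof (intro sum.cong refl)
    fix v assume "v \<in> L"
    then have "v \<noteq> l" using assms by auto
    then show "l * (Aco l v * g v) = (l + cnj l) * g v + Aco l v * (v * g v)"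
    proof -
      have "l * (Aco l v * g v) = (l * Aco l v) * g v" by (simp add: mult.assoc)
      also have "\<dots> = ((l + cnj l) + Aco l v * v) * g v" using id5[OF \<open>v \<noteq> l\<close>] by simp
      also have "\<dots> = (l + cnj l) * g v + Aco l v * (v * g v)" by (simp add: distrib_right mult.assoc)
      finally show ?thesis .
    qed
  qed
  also have "\<dots> = (l + cnj l) * sig L g + (\<Sum>v\<in>L. Aco l v * (v * g v))"
    unfolding sig_def by (simp add: sum.distrib sum_distrib_left)
  finally have e: "l * (\<Sum>v\<in>L. Aco l v * g v) = (l + cnj l) * sig L g + (\<Sum>v\<in>L. Aco l v * (v * g v))" .
  have "m * comb l L a g m = l * a + l * (\<Sum>v\<in>L. Aco l v * g v)"
    using True by (simp add: comb_l distrib_left)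
  also have "\<dots> = comb l L (l * a + (l + cnj l) * sig L g) (\<lambda>v. v * g v) m"
    unfolding e using True by (simp add: comb_l add.assoc)
  finally show ?thesis .
next
  case False
  then show ?thesis by (simp add: comb_m)
qed

lemma Bco_nz: "Re l < 0 \<Longrightarrow> Re m < 0 \<Longrightarrow> m \<noteq> l \<Longrightarrow> Bco l m \<noteq> 0"
  unfolding Bco_def using cnj_ne[of m l] by simp

lemma decomp:
  assumes "finite L" "l \<notin> L" "Re l < 0" "\<forall>v\<in>L. Re v < 0"
  shows "\<forall>m\<in>insert l L. comb l L (c l - (\<Sum>v\<in>L. Aco l v * (c v / Bco l v))) (\<lambda>v. c v / Bco l v) m = c m"
proof
  fix m assume m: "m \<in> insert l L"
  show "comb l L (c l - (\<Sum>v\<in>L. Aco l v * (c v / Bco l v))) (\<lambda>v. c v / Bco l v) m = c m"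
  proof (cases "m = l")
    case True then show ?thesis by (simp add: comb_l)
  next
    case False
    then have "m \<in> L" "Re m < 0" using m assms by auto
    then show ?thesis using False Bco_nz[OF assms(3) \<open>Re m < 0\<close> False] by (simp add: comb_m)
  qed
qed

lemma comb_add: "comb l L a g m + comb l L b h m = comb l L (a + b) (\<lambda>v. g v + h v) m"
  unfolding comb_def by (simp add: sum.distrib algebra_simps)

lemma comb_cong: "(\<And>v. v \<in> L \<Longrightarrow> g v = g' v) \<Longrightarrow> m \<in> insert l L \<Longrightarrow> comb l L a g m = comb l L a g' m"
  unfolding comb_def by auto

lemma Gkll: "Gk l l = complex_of_real (-1 / (2 * Re l))"
proof -
  have "l + cnj l = complex_of_real (2 * Re l)" by (simp add: complex_add_cnj)
  then show ?thesis unfolding Gk_def by simp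
qed

lemma nq_comb:
  assumes "finite L" "l \<notin> L" "Re l < 0" "\<forall>v\<in>L. Re v < 0"
  shows "nq (insert l L) (comb l L a g) = (cmod a)^2 / (2 * (- Re l)) + nq L g"
proof -
  have "a * cnj a * Gk l l = complex_of_real ((cmod a)^2 * (-1 / (2 * Re l)))"
    unfolding Gkll complex_norm_square[symmetric] of_real_mult[symmetric] ..
  then show ?thesis unfolding nq_def ip_comb[OF assms] by simp
qed

definition dg :: "complex \<Rightarrow> (complex \<Rightarrow> complex) \<Rightarrow> complex \<Rightarrow> complex" where
  "dg l c = (\<lambda>v. c v / Bco l v)"
definition da :: "complex \<Rightarrow> complex set \<Rightarrow> (complex \<Rightarrow> complex) \<Rightarrow> complex" where
  "da l L c = c l - (\<Sum>v\<in>L. Aco l v * dg l c v)"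

lemma decomp':
  assumes "finite L" "l \<notin> L" "Re l < 0" "\<forall>v\<in>L. Re v < 0" "m \<in> insert l L"
  shows "c m = comb l L (da l L c) (dg l c) m"
  using decomp[OF assms(1-4), of c] assms(5) unfolding da_def dg_def by auto

lemma nq_cong: "(\<And>m. m \<in> L \<Longrightarrow> x m = y m) \<Longrightarrow> nq L x = nq L y"
  unfolding nq_def using ip_cong[of L x y x y] by simp

lemma nq_dec:
  assumes "finite L" "l \<notin> L" "Re l < 0" "\<forall>v\<in>L. Re v < 0"
  shows "nq (insert l L) c = (cmod (da l L c))^2 / (2 * (- Re l)) + nq L (dg l c)"
proof -
  have "nq (insert l L) c = nq (insert l L) (comb l L (da l L c) (dg l c))"
    by (rule nq_cong) (rule decomp'[OF assms])
  then show ?thesis using nq_comb[OF assms] by simp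
qed

lemma sig_dec:
  assumes "finite L" "l \<notin> L" "Re l < 0" "\<forall>v\<in>L. Re v < 0"
  shows "sig (insert l L) c = da l L c + sig L (dg l c)"
proof -
  have "sig (insert l L) c = sig (insert l L) (comb l L (da l L c) (dg l c))"
    unfolding sig_def by (rule sum.cong[OF refl]) (rule decomp'[OF assms])
  then show ?thesis using sig_comb[OF assms(1,2)] by simp
qed

lemma nq_nonneg:
  assumes "finite L" "\<forall>m\<in>L. Re m < 0"
  shows "0 \<le> nq L c"
  using assms
proof (induction L arbitrary: c rule: finite_induct)
  case empty
  then show ?case by (simp add: nq_def ip_def)
next
  case (insert l F)
  have "0 \<le> nq F (dg l c)" using insert by auto
  moreover have "0 < - Re l" using insert by auto
  moreover have "0 \<le> (cmod (da l F c))^2 / (2 * (- Re l))" by (rule divide_nonneg_pos) (use insert in auto)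
  ultimately show ?case using nq_dec[OF insert(1,2)] insert(4) by auto
qed

lemma cs_ineq:
  fixes x y u v q :: real
  assumes "0 \<le> x" "0 \<le> y" "0 < u" "0 \<le> v" "0 \<le> q" "y^2 \<le> v * q"
  shows "(x + y)^2 \<le> (u + v) * (x^2 / u + q)"
proof (cases "v = 0")
  case True
  then have "y^2 \<le> 0" using assms by simp
  then have "y = 0" by simp
  moreover have "u * (x^2 / u) = x^2" using assms by simp
  moreover have "0 \<le> u * q" using assms by simp
  ultimately show ?thesis using True by (simp add: distrib_left)
next
  case False
  then have v: "0 < v" using assms by simp
  have "0 \<le> (v * x - u * y)^2 / (u * v)" using v assms by simp
  also have "\<dots> = ((v * x)^2 - 2 * (u * v) * (x * y) + (u * y)^2) / (u * v)"
    by (simp add: power2_diff algebra_simps)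
  also have "\<dots> = (v / u) * x^2 - 2 * x * y + (u / v) * y^2"
    using v assms by (simp add: diff_divide_distrib add_divide_distrib power_mult_distrib power2_eq_square mult_ac)
  finally have am: "2 * x * y \<le> (v / u) * x^2 + (u / v) * y^2" by simp
  have "(u / v) * y^2 \<le> (u / v) * (v * q)" using assms v by (intro mult_left_mono) auto
  also have "\<dots> = u * q" using v by simp
  finally have b: "(u / v) * y^2 \<le> u * q" .
  have "(x + y)^2 = x^2 + 2 * x * y + y^2" by (simp add: power2_eq_square algebra_simps)
  also have "\<dots> \<le> x^2 + ((v / u) * x^2 + u * q) + v * q" using am b assms by linarith
  also have "\<dots> = (u + v) * (x^2 / u + q)" using assms by (simp add: algebra_simps add_divide_distrib)
  finally show ?thesis .
qed

definition RR :: "complex set \<Rightarrow> real" where "RR L = (\<Sum>m\<in>L. - Re m)"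

lemma RR_nonneg: "\<forall>m\<in>L. Re m < 0 \<Longrightarrow> 0 \<le> RR L"
  unfolding RR_def by (intro sum_nonneg) auto

lemma sig_bound:
  assumes "finite L" "\<forall>m\<in>L. Re m < 0"
  shows "(cmod (sig L c))^2 \<le> 2 * RR L * nq L c"
  using assms
proof (induction L arbitrary: c rule: finite_induct)
  case empty
  then show ?case by (simp add: sig_def RR_def)
next
  case (insert l F)
  let ?a = "da l F c" and ?g = "dg l c"
  have F: "\<forall>v\<in>F. Re v < 0" "Re l < 0" using insert by auto
  have IH: "(cmod (sig F ?g))^2 \<le> 2 * RR F * nq F ?g" using insert by auto
  have q: "0 \<le> nq F ?g" using nq_nonneg[OF insert(1) F(1)] .
  have R: "0 \<le> RR F" using RR_nonneg[OF F(1)] .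
  have "cmod (sig (insert l F) c) \<le> cmod ?a + cmod (sig F ?g)"
    unfolding sig_dec[OF insert(1,2) F(2,1)] by (rule norm_triangle_ineq)
  then have "(cmod (sig (insert l F) c))^2 \<le> (cmod ?a + cmod (sig F ?g))^2"
    by (intro power_mono) auto
  also have "\<dots> \<le> (2 * (- Re l) + 2 * RR F) * ((cmod ?a)^2 / (2 * (- Re l)) + nq F ?g)"
    using F IH q R by (intro cs_ineq) auto
  also have "\<dots> = 2 * RR (insert l F) * nq (insert l F) c"
    unfolding nq_dec[OF insert(1,2) F(2,1)] RR_def using insert(1,2) by (simp add: algebra_simps)
  finally show ?case .
qed

lemma mink:
  fixes k z x y N N1 N2 :: real
  assumes "0 \<le> k" "0 \<le> z" "0 \<le> x" "0 \<le> y" "z \<le> x + y" "0 \<le> N" "0 \<le> N1" "0 \<le> N2"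
    "sqrt N \<le> sqrt N1 + sqrt N2"
  shows "sqrt (z^2 * k + N) \<le> sqrt (x^2 * k + N1) + sqrt (y^2 * k + N2)"
proof -
  have "z^2 * k \<le> ((x + y) * sqrt k)^2"
    using assms by (simp add: power_mult_distrib mult_right_mono power_mono)
  moreover have "N \<le> (sqrt N1 + sqrt N2)^2"
  proof -
    have "N = (sqrt N)^2" using assms by simp
    also have "\<dots> \<le> (sqrt N1 + sqrt N2)^2" using assms by (intro power_mono) auto
    finally show ?thesis .
  qed
  ultimately have "sqrt (z^2 * k + N) \<le> sqrt (((x + y) * sqrt k)^2 + (sqrt N1 + sqrt N2)^2)"
    by (intro real_sqrt_le_mono) simp
  also have "\<dots> = cmod (Complex (x * sqrt k) (sqrt N1) + Complex (y * sqrt k) (sqrt N2))"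
  proof -
    have "Complex (x * sqrt k) (sqrt N1) + Complex (y * sqrt k) (sqrt N2) = Complex ((x + y) * sqrt k) (sqrt N1 + sqrt N2)"
      by (simp add: complex_eq_iff distrib_right)
    then show ?thesis by (simp add: complex_norm)
  qed
  also have "\<dots> \<le> cmod (Complex (x * sqrt k) (sqrt N1)) + cmod (Complex (y * sqrt k) (sqrt N2))"
    by (rule norm_triangle_ineq)
  also have "\<dots> = sqrt (x^2 * k + N1) + sqrt (y^2 * k + N2)"
    using assms by (simp add: complex_norm power_mult_distrib)
  finally show ?thesis .
qed

lemma nq_triangle:
  assumes "finite L" "\<forall>m\<in>L. Re m < 0"
  shows "sqrt (nq L (\<lambda>m. x m + y m)) \<le> sqrt (nq L x) + sqrt (nq L y)"
  using assms
proof (induction L arbitrary: x y rule: finite_induct)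
  case empty
  then show ?case by (simp add: nq_def ip_def)
next
  case (insert l F)
  have F: "\<forall>v\<in>F. Re v < 0" "Re l < 0" using insert by auto
  let ?a = "da l F x" and ?g = "dg l x" and ?b = "da l F y" and ?h = "dg l y"
  have e1: "da l F (\<lambda>m. x m + y m) = ?a + ?b"
    unfolding da_def dg_def by (simp add: add_divide_distrib distrib_left sum.distrib)
  have e2: "dg l (\<lambda>m. x m + y m) = (\<lambda>v. ?g v + ?h v)"
    unfolding dg_def by (simp add: add_divide_distrib)
  have IH: "sqrt (nq F (\<lambda>v. ?g v + ?h v)) \<le> sqrt (nq F ?g) + sqrt (nq F ?h)"
    using insert F by blast
  have r: "0 \<le> 1 / (2 * (- Re l))" using F by simp
  have "sqrt (nq (insert l F) (\<lambda>m. x m + y m))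
      = sqrt ((cmod (?a + ?b))^2 * (1 / (2 * (- Re l))) + nq F (\<lambda>v. ?g v + ?h v))"
    unfolding nq_dec[OF insert(1,2) F(2,1)] e1 e2 by simp
  also have "\<dots> \<le> sqrt ((cmod ?a)^2 * (1 / (2 * (- Re l))) + nq F ?g) + sqrt ((cmod ?b)^2 * (1 / (2 * (- Re l))) + nq F ?h)"
    by (rule mink[OF r _ _ _ norm_triangle_ineq _ _ _ IH])
       (auto intro: nq_nonneg[OF insert(1) F(1)])
  also have "\<dots> = sqrt (nq (insert l F) x) + sqrt (nq (insert l F) y)"
    unfolding nq_dec[OF insert(1,2) F(2,1)] by simp
  finally show ?case .
qed

definition TT :: "complex set \<Rightarrow> real" where
  "TT L = (RR L)^2 - (\<Sum>m\<in>L. (Re m)^2)"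

lemma TT_insert: "finite F \<Longrightarrow> l \<notin> F \<Longrightarrow> TT (insert l F) = TT F + 2 * (- Re l) * RR F"
  unfolding TT_def RR_def by (simp add: power2_eq_square algebra_simps)

lemma TT_nonneg: "finite L \<Longrightarrow> \<forall>m\<in>L. Re m < 0 \<Longrightarrow> 0 \<le> TT L"
proof (induction L rule: finite_induct)
  case empty then show ?case by (simp add: TT_def RR_def)
next
  case (insert l F)
  then have "0 \<le> TT F" "0 \<le> RR F" "0 < - Re l" using RR_nonneg by auto
  then have "0 \<le> (- Re l) * RR F" by (intro mult_nonneg_nonneg) auto
  then show ?case using TT_insert[OF insert(1,2)] \<open>0 \<le> TT F\<close> by linarith
qed

lemma AB_exists:
  assumes "finite L" "\<forall>m\<in>L. Re m < 0" "\<forall>m\<in>L. cmod m \<le> K"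
  shows "\<exists>A B. \<forall>c. (\<forall>m\<in>L. m * c m = A c m + B c m) \<and> nq L (A c) \<le> K^2 * nq L c
            \<and> nq L (B c) \<le> 2 * TT L * nq L c"
  using assms
proof (induction L rule: finite_induct)
  case empty
  show ?case by (rule exI[of _ "\<lambda>c m. 0"], rule exI[of _ "\<lambda>c m. 0"]) (simp add: nq_def ip_def)
next
  case (insert l F)
  have F: "\<forall>v\<in>F. Re v < 0" "Re l < 0" "\<forall>v\<in>F. cmod v \<le> K" "cmod l \<le> K" using insert by auto
  obtain A' B' where AB: "\<And>c. (\<forall>m\<in>F. m * c m = A' c m + B' c m) \<and> nq F (A' c) \<le> K^2 * nq F c
            \<and> nq F (B' c) \<le> 2 * TT F * nq F c"
    using insert F by blast
  define A where "A = (\<lambda>c. comb l F (l * da l F c) (A' (dg l c)))"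
  define B where "B = (\<lambda>c. comb l F ((l + cnj l) * sig F (dg l c)) (B' (dg l c)))"
  have r: "0 < - Re l" using F by simp
  have "\<forall>c. (\<forall>m\<in>insert l F. m * c m = A c m + B c m) \<and> nq (insert l F) (A c) \<le> K^2 * nq (insert l F) c
       \<and> nq (insert l F) (B c) \<le> 2 * TT (insert l F) * nq (insert l F) c"
  proof
    fix c
    let ?a = "da l F c" and ?g = "dg l c"
    have q: "0 \<le> nq F ?g" using nq_nonneg[OF insert(1) F(1)] .
    have a0: "0 \<le> (cmod ?a)^2 / (2 * (- Re l))" by (rule divide_nonneg_pos) (use r in auto)
    have nqc: "nq (insert l F) c = (cmod ?a)^2 / (2 * (- Re l)) + nq F ?g"
      by (rule nq_dec[OF insert(1,2) F(2,1)])
    have P1: "\<forall>m\<in>insert l F. m * c m = A c m + B c m"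
    proof
      fix m assume m: "m \<in> insert l F"
      have "m * c m = m * comb l F ?a ?g m" using decomp'[OF insert(1,2) F(2,1) m] by simp
      also have "\<dots> = comb l F (l * ?a + (l + cnj l) * sig F ?g) (\<lambda>v. v * ?g v) m"
        by (rule comb_D[OF insert(1,2) m])
      also have "\<dots> = comb l F (l * ?a + (l + cnj l) * sig F ?g) (\<lambda>v. A' ?g v + B' ?g v) m"
        by (rule comb_cong[OF _ m]) (use AB in auto)
      also have "\<dots> = A c m + B c m"
        unfolding A_def B_def comb_add ..
      finally show "m * c m = A c m + B c m" .
    qed
    have "nq (insert l F) (A c) = (cmod (l * ?a))^2 / (2 * (- Re l)) + nq F (A' ?g)"
      unfolding A_def by (rule nq_comb[OF insert(1,2) F(2,1)])
    also have "\<dots> \<le> K^2 * ((cmod ?a)^2 / (2 * (- Re l))) + K^2 * nq F ?g"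
    proof (rule add_mono)
      have "(cmod (l * ?a))^2 = (cmod l)^2 * (cmod ?a)^2" by (simp add: norm_mult power_mult_distrib)
      also have "\<dots> \<le> K^2 * (cmod ?a)^2" using F(4) by (intro mult_right_mono power_mono) auto
      finally have "(cmod (l * ?a))^2 / (2 * (- Re l)) \<le> K^2 * (cmod ?a)^2 / (2 * (- Re l))"
        by (rule divide_right_mono) (use r in simp)
      then show "(cmod (l * ?a))^2 / (2 * (- Re l)) \<le> K^2 * ((cmod ?a)^2 / (2 * (- Re l)))"
        by simp
      show "nq F (A' ?g) \<le> K^2 * nq F ?g" using AB by blast
    qed
    also have "\<dots> = K^2 * nq (insert l F) c" unfolding nqc by (simp only: distrib_left)
    finally have P2: "nq (insert l F) (A c) \<le> K^2 * nq (insert l F) c" .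
    have lc: "cmod (l + cnj l) = 2 * (- Re l)"
      using F(2) by (simp add: complex_add_cnj)
    have hB: "nq F (B' ?g) \<le> 2 * TT F * nq F ?g" using AB by blast
    have s1: "2 * (- Re l) * (cmod (sig F ?g))^2 \<le> 2 * (- Re l) * (2 * RR F * nq F ?g)"
      using r sig_bound[OF insert(1) F(1), of ?g] by (intro mult_left_mono) auto
    have "nq (insert l F) (B c) = (cmod ((l + cnj l) * sig F ?g))^2 / (2 * (- Re l)) + nq F (B' ?g)"
      unfolding B_def by (rule nq_comb[OF insert(1,2) F(2,1)])
    also have "(cmod ((l + cnj l) * sig F ?g))^2 / (2 * (- Re l)) = 2 * (- Re l) * (cmod (sig F ?g))^2"
      using r unfolding norm_mult lc by (simp add: power2_eq_square)
    also have "2 * (- Re l) * (cmod (sig F ?g))^2 + nq F (B' ?g) \<le> 2 * (- Re l) * (2 * RR F * nq F ?g) + 2 * TT F * nq F ?g"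
      using s1 hB by (rule add_mono)
    also have "\<dots> = 2 * TT (insert l F) * nq F ?g"
      unfolding TT_insert[OF insert(1,2)] by (simp add: algebra_simps)
    also have "\<dots> \<le> 2 * TT (insert l F) * nq (insert l F) c"
      unfolding nqc using TT_nonneg[OF _ insert(4)] insert(1) a0
      by (intro mult_left_mono) auto
    finally have P3: "nq (insert l F) (B c) \<le> 2 * TT (insert l F) * nq (insert l F) c" by simp
    show "(\<forall>m\<in>insert l F. m * c m = A c m + B c m) \<and> nq (insert l F) (A c) \<le> K^2 * nq (insert l F) c
       \<and> nq (insert l F) (B c) \<le> 2 * TT (insert l F) * nq (insert l F) c"
      using P1 P2 P3 by blast
  qed
  then show ?case by blast
qed



definition Qr :: "(nat \<Rightarrow> complex) \<Rightarrow> nat set \<Rightarrow> real" where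
  "Qr lam J = (\<Sum>j\<in>J. - Re (lam j))^2 - (\<Sum>j\<in>J. (Re (lam j))^2)"

lemma Qr_insert: "finite J \<Longrightarrow> k \<notin> J \<Longrightarrow> Qr lam (insert k J) = Qr lam J + 2 * (- Re (lam k)) * (\<Sum>j\<in>J. - Re (lam j))"
  unfolding Qr_def by (simp add: power2_eq_square algebra_simps)

lemma TT_le_Qr:
  assumes "finite J" "\<forall>j\<in>J. Re (lam j) < 0"
  shows "TT (lam ` J) \<le> Qr lam J"
  using assms
proof (induction J rule: finite_induct)
  case empty then show ?case by (simp add: TT_def RR_def Qr_def)
next
  case (insert k J)
  have IH: "TT (lam ` J) \<le> Qr lam J" using insert by auto
  have rk: "0 \<le> - Re (lam k)" using insert by auto
  have sJ: "0 \<le> (\<Sum>j\<in>J. - Re (lam j))" using insert by (intro sum_nonneg) auto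
  have Qi: "Qr lam (insert k J) = Qr lam J + 2 * (- Re (lam k)) * (\<Sum>j\<in>J. - Re (lam j))"
    by (rule Qr_insert[OF insert(1,2)])
  have "0 \<le> (- Re (lam k)) * (\<Sum>j\<in>J. - Re (lam j))" by (rule mult_nonneg_nonneg[OF rk sJ])
  then have pos: "0 \<le> 2 * (- Re (lam k)) * (\<Sum>j\<in>J. - Re (lam j))" by simp
  show ?case
  proof (cases "lam k \<in> lam ` J")
    case True
    then have "lam ` insert k J = lam ` J" by auto
    then show ?thesis using IH Qi pos by simp
  next
    case False
    have "RR (lam ` J) \<le> (\<Sum>j\<in>J. - Re (lam j))"
      unfolding RR_def using sum_image_le[OF insert(1), of "\<lambda>m. - Re m" lam] insert(4)
      by (simp add: o_def less_imp_le)
    then have "2 * (- Re (lam k)) * RR (lam ` J) \<le> 2 * (- Re (lam k)) * (\<Sum>j\<in>J. - Re (lam j))"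
      using rk by (intro mult_left_mono) auto
    then show ?thesis using IH Qi TT_insert[OF _ False] insert(1) by simp
  qed
qed

lemma S_eq: "2 * (\<Sum>j=1..n. Re (lam j) * (\<Sum>k=j+1..n. Re (lam k))) = Qr lam {1..n}"
proof (induction n)
  case 0 then show ?case by (simp add: Qr_def)
next
  case (Suc n)
  have "(\<Sum>j=1..Suc n. Re (lam j) * (\<Sum>k=j+1..Suc n. Re (lam k)))
      = (\<Sum>j=1..n. Re (lam j) * (\<Sum>k=j+1..Suc n. Re (lam k)))"
    by simp
  also have "\<dots> = (\<Sum>j=1..n. Re (lam j) * (\<Sum>k=j+1..n. Re (lam k)) + Re (lam j) * Re (lam (Suc n)))"
    by (intro sum.cong refl) (auto simp: distrib_left)
  also have "\<dots> = (\<Sum>j=1..n. Re (lam j) * (\<Sum>k=j+1..n. Re (lam k))) + (\<Sum>j=1..n. Re (lam j)) * Re (lam (Suc n))"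
    by (simp add: sum.distrib sum_distrib_right)
  finally have e: "2 * (\<Sum>j=1..Suc n. Re (lam j) * (\<Sum>k=j+1..Suc n. Re (lam k)))
     = 2 * (\<Sum>j=1..n. Re (lam j) * (\<Sum>k=j+1..n. Re (lam k))) + 2 * (\<Sum>j=1..n. Re (lam j)) * Re (lam (Suc n))"
    by simp
  have "{1..Suc n} = insert (Suc n) {1..n}" by auto
  then have "Qr lam {1..Suc n} = Qr lam {1..n} + 2 * (- Re (lam (Suc n))) * (\<Sum>j\<in>{1..n}. - Re (lam j))"
    using Qr_insert[of "{1..n}" "Suc n" lam] by simp
  then show ?case using e Suc by (simp add: sum_negf)
qed

lemma expf_deriv:
  "(expf L c has_vector_derivative expf L (\<lambda>m. m * c m) t) (at t)"
proof -
  have "((\<lambda>w. \<Sum>m\<in>L. c m * exp (m * w)) has_field_derivative (\<Sum>m\<in>L. c m * (m * exp (m * of_real t)))) (at (of_real t))"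
    apply (auto intro!: derivative_eq_intros)
    apply (intro sum.cong refl)
    apply (simp add: mult_ac)
    done
  from has_vector_derivative_real_field[OF this]
  have "((\<lambda>x. \<Sum>m\<in>L. c m * exp (m * of_real x)) has_vector_derivative (\<Sum>m\<in>L. c m * (m * exp (m * of_real t)))) (at t)" .
  moreover have "(\<Sum>m\<in>L. c m * (m * exp (m * of_real t))) = expf L (\<lambda>m. m * c m) t"
    unfolding expf_def by (intro sum.cong refl) (metis mult.assoc mult.commute)
  ultimately show ?thesis unfolding expf_def by simp
qed

theorem theorem11p1:
  fixes n :: nat and a lam :: "nat \<Rightarrow> complex" and f :: "real \<Rightarrow> complex"
  assumes "n \<ge> 1"
    and "\<And>j. j \<in> {1..n} \<Longrightarrow> Re (lam j) < 0"
    and "\<And>t. f t = (\<Sum>j=1..n. a j * exp (lam j * complex_of_real t))"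
  shows "L2_norm_pos (\<lambda>t. vector_derivative f (at t))
     \<le> (1/2 + (MAX j\<in>{1..n}. cmod (lam j + 1/2))
          + 2 * sqrt (\<Sum>j=1..n. Re (lam j) * (\<Sum>k=j+1..n. Re (lam k))))
        * L2_norm_pos f"
proof -
  define L where "L = lam ` {1..n}"
  define c where "c = (\<lambda>m. \<Sum>j\<in>{j\<in>{1..n}. lam j = m}. a j)"
  define K where "K = 1/2 + (MAX j\<in>{1..n}. cmod (lam j + 1/2))"
  define S where "S = (\<Sum>j=1..n. Re (lam j) * (\<Sum>k=j+1..n. Re (lam k)))"
  have fin: "finite L" unfolding L_def by simp
  have neg: "\<forall>m\<in>L. Re m < 0" unfolding L_def using assms(2) by auto
  have fexp: "f = expf L c"
  proof
    fix t
    have "f t = (\<Sum>j\<in>{1..n}. a j * exp (lam j * complex_of_real t))" by (rule assms(3))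
    also have "\<dots> = (\<Sum>m\<in>L. \<Sum>j\<in>{j\<in>{1..n}. lam j = m}. a j * exp (lam j * complex_of_real t))"
      unfolding L_def by (rule sum.image_gen) simp
    also have "\<dots> = expf L c t"
      unfolding expf_def c_def sum_distrib_right by (intro sum.cong refl) auto
    finally show "f t = expf L c t" .
  qed
  have fd: "(\<lambda>t. vector_derivative f (at t)) = expf L (\<lambda>m. m * c m)"
    unfolding fexp using expf_deriv by (intro ext vector_derivative_at) blast
  have Kb: "\<forall>m\<in>L. cmod m \<le> K"
  proof
    fix m assume "m \<in> L"
    then obtain j where j: "j \<in> {1..n}" "m = lam j" unfolding L_def by auto
    have "cmod m \<le> cmod (lam j + 1/2) + cmod (1/2 :: complex)"
      using norm_triangle_ineq4[of "lam j + 1/2" "1/2"] j by simp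
    also have "cmod (lam j + 1/2) \<le> (MAX j\<in>{1..n}. cmod (lam j + 1/2))"
      using j by (intro Max_ge) auto
    finally show "cmod m \<le> K" unfolding K_def by simp
  qed
  have K0: "0 \<le> K" using Kb fin neg assms(1) unfolding L_def
    by (metis (no_types, lifting) L_def atLeastAtMost_iff image_eqI norm_ge_zero order_trans order_refl)
  obtain A B where AB: "\<And>c. (\<forall>m\<in>L. m * c m = A c m + B c m) \<and> nq L (A c) \<le> K^2 * nq L c
            \<and> nq L (B c) \<le> 2 * TT L * nq L c"
    using AB_exists[OF fin neg Kb] by blast
  have q0: "0 \<le> nq L c" by (rule nq_nonneg[OF fin neg])
  have T0: "0 \<le> TT L" by (rule TT_nonneg[OF fin neg])
  have nf: "L2_norm_pos f = sqrt (nq L c)"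
    unfolding L2_norm_pos_def fexp L2_expf[OF fin neg] ..
  have "L2_norm_pos (\<lambda>t. vector_derivative f (at t)) = sqrt (nq L (\<lambda>m. m * c m))"
    unfolding L2_norm_pos_def fd L2_expf[OF fin neg] ..
  also have "nq L (\<lambda>m. m * c m) = nq L (\<lambda>m. A c m + B c m)"
    using AB[of c] by (intro nq_cong) auto
  also have "sqrt \<dots> \<le> sqrt (nq L (A c)) + sqrt (nq L (B c))"
    by (rule nq_triangle[OF fin neg])
  also have "\<dots> \<le> sqrt (K^2 * nq L c) + sqrt (2 * TT L * nq L c)"
    using AB[of c] by (intro add_mono real_sqrt_le_mono) auto
  also have "\<dots> = (K + sqrt (2 * TT L)) * sqrt (nq L c)"
    using K0 by (simp add: real_sqrt_mult distrib_right)
  also have "\<dots> \<le> (K + 2 * sqrt S) * sqrt (nq L c)"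
  proof (intro mult_right_mono add_left_mono)
    have "2 * TT L \<le> 2 * Qr lam {1..n}"
      unfolding L_def using TT_le_Qr[of "{1..n}" lam] assms(2) by simp
    also have "\<dots> = 4 * S" unfolding S_def S_eq[symmetric] by simp
    finally have "sqrt (2 * TT L) \<le> sqrt (4 * S)" by (rule real_sqrt_le_mono)
    also have "\<dots> = 2 * sqrt S" by (simp add: real_sqrt_mult)
    finally show "sqrt (2 * TT L) \<le> 2 * sqrt S" .
  qed (simp add: q0)
  finally show ?thesis unfolding nf K_def S_def by simp
qed


end
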